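(* Fix $0<p<1$ and $\lambda>0$, and for each $n$ let $\Delta=\Delta(n)=\frac{-\ln\left(1-\sqrt[n]{p}\right)}{\lambda}$. Then the expected response time of the protocol $\mathrm{PA\text{-}CORE}(\Delta)$ satisfies $\mathbb{E}[RT]\in O\!\left(\frac{\sqrt n\,\log n}{\lambda}\right)$ as $n\to\infty$; in particular it is sub-linear in $n$.
   Context: Setting: a supervisor $i_0$ and $n+1$ worker agents $i_1,\ldots,i_{n+1}$, connected by a complete reliable network; each message's delay is an independent exponential random variable with parameter $\lambda$. There is no global clock: each agent $i_k$ has a local clock $C_{i_k}(t)$ that measures elapsed time accurately but may be offset by an unknown constant; $C_{i_0}(t)=t$, and $i_0$ receives an external input at time $t=0$. Let $\delta=\frac{\ln n}{\lambda\sqrt n}$. Protocol $\mathrm{PA\text{-}CORE}(\Delta)$: at time $0$, $i_0$ sends "trigger" to all workers. Upon receiving "trigger", a worker sends "redirect" to each of the other $n$ workers. Each worker $i_k$ records its local clock readings $\tau_1,\ldots,\tau_n$ at the arrivals of the $n$ "redirect" messages it receives; upon the $n$-th one it computes $T=\frac1n\sum_{m=1}^n\tau_m-\frac{2}{\lambda}$, defines the adjusted clock $C^{Adj}_{i_k}(t)=C_{i_k}(t)-T$, waits until $C^{Adj}_{i_k}(t)\ge \Delta+2\delta(k-1)$ (not waiting if this already holds), and performs its action $\alpha_k$. With $t_k$ the (real) time at which $i_k$ performs $\alpha_k$, the response time is $RT=\max_k t_k$. *)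

theory Defs
  imports "HOL-Probability.Probability"
begin

text \<open>Messages: (0,j) is the trigger from the supervisor to worker j;
  (j,k) with j,k \<ge> 1, j \<noteq> k is the redirect from worker j to worker k.
  Workers are indexed 1..n+1.\<close>
definition msg_index :: "nat \<Rightarrow> (nat \<times> nat) set" where
  "msg_index n = {(i, j). i \<le> n + 1 \<and> 1 \<le> j \<and> j \<le> n + 1 \<and> i \<noteq> j}"

definition delay_space :: "real \<Rightarrow> nat \<Rightarrow> ((nat \<times> nat) \<Rightarrow> real) measure" where
  "delay_space l n = PiM (msg_index n) (\<lambda>_. density lborel (exponential_density l))"

definition small_delta :: "real \<Rightarrow> nat \<Rightarrow> real" where
  "small_delta l n = ln (real n) / (l * sqrt (real n))"

definition arrival :: "((nat \<times> nat) \<Rightarrow> real) \<Rightarrow> nat \<Rightarrow> nat \<Rightarrow> real" where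
  "arrival \<omega> j k = \<omega> (0, j) + \<omega> (j, k)"

text \<open>Local clock offsets cancel: the adjusted clock equals
  t - (mean of arrival times) + 2/l, and the worker acts at the later of the
  n-th redirect arrival and the moment the adjusted clock reaches
  Delta + 2 delta (k-1).\<close>
definition action_time :: "real \<Rightarrow> real \<Rightarrow> nat \<Rightarrow> ((nat \<times> nat) \<Rightarrow> real) \<Rightarrow> nat \<Rightarrow> real" where
  "action_time l D n \<omega> k =
     max (Max {arrival \<omega> j k | j. j \<in> {1..n+1} \<and> j \<noteq> k})
         ((\<Sum>j\<in>{1..n+1} - {k}. arrival \<omega> j k) / real n - 2 / l
           + D + 2 * small_delta l n * (real k - 1))"

definition response_time :: "real \<Rightarrow> real \<Rightarrow> nat \<Rightarrow> ((nat \<times> nat) \<Rightarrow> real) \<Rightarrow> real" where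
  "response_time l D n \<omega> = Max (action_time l D n \<omega> ` {1..n+1})"

definition Delta_p :: "real \<Rightarrow> real \<Rightarrow> nat \<Rightarrow> real" where
  "Delta_p p l n = - ln (1 - root n p) / l"

end

theory Submission
  imports Defs
begin

lemma xle: fixes x t :: real assumes "t > 0" shows "x \<le> t + x^6 / t^5"
proof (cases "x \<le> t")
  case True then show ?thesis using assms by (simp add: add_increasing2)
next
  case False
  then have "1 \<le> x / t" using assms by simp
  then have "1 \<le> (x/t)^5" by simp
  then have "x * 1 \<le> x * (x/t)^5" using False assms by (intro mult_left_mono) auto
  also have "\<dots> = x^6/t^5" by (simp add: power_divide eval_nat_numeral)
  finally show ?thesis using assms by simp
qed

lemma arr_le:
  fixes t :: real assumes "t > 0" "j \<in> {1..n+1}" "k \<in> {1..n+1}" "j \<noteq> k"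
  shows "arrival \<omega> j k \<le> 2*t + (\<Sum>i\<in>msg_index n. (\<omega> i)^6 / t^5)"
proof -
  have sub: "{(0,j),(j,k)} \<subseteq> msg_index n" using assms by (auto simp: msg_index_def)
  have fin: "finite (msg_index n)"
    by (rule finite_subset[of _ "{0..n+1} \<times> {0..n+1}"]) (auto simp: msg_index_def)
  have ne: "(0,j) \<noteq> (j,k)" using assms by auto
  have "(\<Sum>i\<in>{(0,j),(j,k)}. (\<omega> i)^6 / t^5) \<le> (\<Sum>i\<in>msg_index n. (\<omega> i)^6 / t^5)"
    by (rule sum_mono2[OF fin sub]) (use assms in auto)
  moreover have "(\<Sum>i\<in>{(0,j),(j,k)}. (\<omega> i)^6 / t^5) = \<omega> (0,j)^6/t^5 + \<omega> (j,k)^6/t^5"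
    using ne by simp
  ultimately show ?thesis unfolding arrival_def
    using xle[OF assms(1), of "\<omega> (0,j)"] xle[OF assms(1), of "\<omega> (j,k)"] by linarith
qed

lemma rt_le:
  fixes t l D :: real assumes "t > 0" "n \<ge> 1" "l > 0" "D \<ge> 0"
  shows "response_time l D n \<omega> \<le> 2*t + (\<Sum>i\<in>msg_index n. (\<omega> i)^6 / t^5) + D + 2 * small_delta l n * real n"
proof -
  define B where "B = 2*t + (\<Sum>i\<in>msg_index n. (\<omega> i)^6 / t^5)"
  have dpos: "small_delta l n \<ge> 0" using assms by (simp add: small_delta_def)
  have "action_time l D n \<omega> k \<le> B + D + 2 * small_delta l n * real n" if k: "k \<in> {1..n+1}" for k
  proof -
    have fin: "finite {arrival \<omega> j k | j. j \<in> {1..n+1} \<and> j \<noteq> k}" by simp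
    have ne: "{arrival \<omega> j k | j. j \<in> {1..n+1} \<and> j \<noteq> k} \<noteq> {}"
    proof -
      have "(if k = 1 then 2 else 1) \<in> {1..n+1} \<and> (if k = 1 then 2 else 1) \<noteq> k" using k assms by auto
      then show ?thesis by blast
    qed
    have A: "Max {arrival \<omega> j k | j. j \<in> {1..n+1} \<and> j \<noteq> k} \<le> B"
      using fin ne by (subst Max_le_iff) (auto simp: B_def intro!: arr_le[OF assms(1)] k)
    have cs: "card ({1..n+1} - {k}) = n" using k by simp
    have "(\<Sum>j\<in>{1..n+1} - {k}. arrival \<omega> j k) \<le> (\<Sum>j\<in>{1..n+1} - {k}. B)"
      by (rule sum_mono) (auto simp: B_def intro!: arr_le[OF assms(1)] k)
    also have "\<dots> = real n * B" using cs by simp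
    finally have "(\<Sum>j\<in>{1..n+1} - {k}. arrival \<omega> j k) / real n \<le> B" using assms
      by (simp add: divide_le_eq mult.commute)
    moreover have "2 * small_delta l n * (real k - 1) \<le> 2 * small_delta l n * real n"
      using k dpos by (intro mult_left_mono) auto
    moreover have "2 / l \<ge> 0" using assms by simp
    moreover have "0 \<le> 2 * small_delta l n * real n" using dpos by simp
    ultimately show ?thesis unfolding action_time_def using A assms
      by (intro max.boundedI) linarith+
  qed
  then show ?thesis unfolding response_time_def B_def
    by (subst Max_le_iff) auto
qed

lemma moment6:
  fixes l t :: real assumes "l > 0" "t > 0"
  shows "(\<integral>\<^sup>+x. ennreal (x^6 / t^5) \<partial>density lborel (exponential_density l)) = ennreal (720 / (l^6 * t^5))"
proof -
  have "(\<integral>\<^sup>+x. ennreal (x^6 / t^5) \<partial>density lborel (exponential_density l))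
     = (\<integral>\<^sup>+x. ennreal (exponential_density l x) * ennreal (x^6 / t^5) \<partial>lborel)"
    by (subst nn_integral_density) (auto simp: assms)
  also have "\<dots> = (\<integral>\<^sup>+x. ennreal (1/t^5) * ennreal (exponential_density l x * x^6) \<partial>lborel)"
    using assms by (intro nn_integral_cong) (auto simp: ennreal_mult'[symmetric] exponential_density_nonneg)
  also have "\<dots> = ennreal (1/t^5) * (\<integral>\<^sup>+x. ennreal (exponential_density l x * x^6) \<partial>lborel)"
    by (rule nn_integral_cmult) auto
  also have "\<dots> = ennreal (1/t^5) * ennreal (fact 6 / (fact 0 * l^6))"
    using nn_integral_erlang_ith_moment[OF assms(1), of 0 6] by simp
  also have "\<dots> = ennreal (720 / (l^6 * t^5))"
    using assms by (subst ennreal_mult'[symmetric]) (auto simp: fact_numeral)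
  finally show ?thesis .
qed

lemma comp_int:
  fixes l t :: real assumes "l > 0" "t > 0" "i \<in> msg_index n"
  shows "(\<integral>\<^sup>+\<omega>. ennreal (\<omega> i^6 / t^5) \<partial>delay_space l n) = ennreal (720 / (l^6 * t^5))"
proof -
  have "(\<integral>\<^sup>+\<omega>. ennreal (\<omega> i^6 / t^5) \<partial>delay_space l n)
     = (\<integral>\<^sup>+x. ennreal (x^6 / t^5) \<partial>distr (delay_space l n) (density lborel (exponential_density l)) (\<lambda>\<omega>. \<omega> i))"
    unfolding delay_space_def using assms
    by (subst nn_integral_distr) auto
  also have "distr (delay_space l n) (density lborel (exponential_density l)) (\<lambda>\<omega>. \<omega> i) = density lborel (exponential_density l)"
    unfolding delay_space_def
    by (rule distr_PiM_component) (use assms prob_space_exponential_density in auto)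
  finally show ?thesis using moment6[OF assms(1,2)] by simp
qed

lemma fin_msg: "finite (msg_index n)"
  by (rule finite_subset[of _ "{0..n+1} \<times> {0..n+1}"]) (auto simp: msg_index_def)

lemma card_msg: "card (msg_index n) \<le> (n+2)^2"
proof -
  have "card (msg_index n) \<le> card ({0..n+1} \<times> {0..n+1})"
    by (rule card_mono) (auto simp: msg_index_def)
  then show ?thesis by (simp add: power2_eq_square)
qed

lemma int_bound:
  fixes l t D :: real assumes "l > 0" "t > 0" "n \<ge> 1" "D \<ge> 0"
  shows "(\<integral>\<^sup>+\<omega>. ennreal (response_time l D n \<omega>) \<partial>delay_space l n)
    \<le> ennreal (2*t + D + 2 * small_delta l n * real n + real (card (msg_index n)) * (720 / (l^6 * t^5)))"
proof -
  define c where "c = 2*t + D + 2 * small_delta l n * real n"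
  have c0: "c \<ge> 0" using assms by (simp add: c_def small_delta_def)
  interpret P: prob_space "delay_space l n" unfolding delay_space_def
    by (intro prob_space_PiM) (use assms prob_space_exponential_density in auto)
  have "(\<integral>\<^sup>+\<omega>. ennreal (response_time l D n \<omega>) \<partial>delay_space l n)
     \<le> (\<integral>\<^sup>+\<omega>. ennreal c + (\<Sum>i\<in>msg_index n. ennreal (\<omega> i^6 / t^5)) \<partial>delay_space l n)"
  proof (rule nn_integral_mono)
    fix \<omega>
    have "ennreal (response_time l D n \<omega>) \<le> ennreal (c + (\<Sum>i\<in>msg_index n. \<omega> i^6 / t^5))"
      using rt_le[OF assms(2,3,1,4), of \<omega>] by (intro ennreal_leI) (simp add: c_def)
    also have "\<dots> = ennreal c + (\<Sum>i\<in>msg_index n. ennreal (\<omega> i^6 / t^5))"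
    proof -
      have "ennreal (c + (\<Sum>i\<in>msg_index n. \<omega> i^6 / t^5)) = ennreal c + ennreal (\<Sum>i\<in>msg_index n. \<omega> i^6 / t^5)"
        using c0 assms by (intro ennreal_plus) (auto intro!: sum_nonneg)
      also have "ennreal (\<Sum>i\<in>msg_index n. \<omega> i^6 / t^5) = (\<Sum>i\<in>msg_index n. ennreal (\<omega> i^6 / t^5))"
        using assms by (intro sum_ennreal[symmetric]) auto
      finally show ?thesis .
    qed
    finally show "ennreal (response_time l D n \<omega>) \<le> \<dots>" .
  qed
  also have "\<dots> = (\<integral>\<^sup>+\<omega>. ennreal c \<partial>delay_space l n) + (\<integral>\<^sup>+\<omega>. (\<Sum>i\<in>msg_index n. ennreal (\<omega> i^6 / t^5)) \<partial>delay_space l n)"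
    by (rule nn_integral_add) (auto simp: delay_space_def)
  also have "(\<integral>\<^sup>+\<omega>. (\<Sum>i\<in>msg_index n. ennreal (\<omega> i^6 / t^5)) \<partial>delay_space l n)
     = (\<Sum>i\<in>msg_index n. (\<integral>\<^sup>+\<omega>. ennreal (\<omega> i^6 / t^5) \<partial>delay_space l n))"
    by (rule nn_integral_sum) (auto simp: delay_space_def msg_index_def)
  also have "\<dots> = (\<Sum>i\<in>msg_index n. ennreal (720 / (l^6 * t^5)))"
    by (rule sum.cong) (auto intro: comp_int[OF assms(1,2)])
  also have "(\<integral>\<^sup>+\<omega>. ennreal c \<partial>delay_space l n) = ennreal c"
    by (simp add: P.emeasure_space_1)
  also have "(\<Sum>i\<in>msg_index n. ennreal (720 / (l^6 * t^5))) = ennreal (real (card (msg_index n)) * (720 / (l^6 * t^5)))"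
    using assms by (simp only: sum_constant ennreal_of_nat_eq_real_of_nat) (rule ennreal_mult''[symmetric], simp)
  also have "ennreal c + \<dots> = ennreal (c + real (card (msg_index n)) * (720 / (l^6 * t^5)))"
    using c0 assms by (intro ennreal_plus[symmetric]) auto
  finally show ?thesis by (simp add: c_def)
qed

lemma Dp_bound:
  fixes p l :: real assumes "0 < p" "p < 1" "0 < l" "n \<ge> 1"
  shows "0 \<le> Delta_p p l n \<and> l * Delta_p p l n \<le> ln (real n) + (ln (1 + - ln p) - ln (- ln p))"
proof -
  define q where "q = - ln p"
  have q0: "q > 0" using assms by (simp add: q_def)
  have n0: "real n > 0" using assms by simp
  have r: "root n p = exp (- q / real n)"
    using assms by (simp add: root_powr_inverse powr_def q_def)
  have e: "exp (q / real n) \<ge> 1 + q / real n" by (rule exp_ge_add_one_self)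
  have "exp (- q / real n) = 1 / exp (q / real n)" by (simp add: exp_minus field_simps)
  also have "\<dots> \<le> 1 / (1 + q / real n)" using e q0 n0 by (intro divide_left_mono) (auto intro!: mult_pos_pos add_pos_pos)
  also have "\<dots> = real n / (real n + q)" using n0 q0 by (simp add: field_simps)
  finally have "root n p \<le> real n / (real n + q)" using r by simp
  then have lo: "1 - root n p \<ge> q / (real n + q)" using n0 q0 by (simp add: field_simps)
  have hi: "1 - root n p < 1" using r by simp
  have qpos: "q / (real n + q) > 0" using n0 q0 by simp
  have "ln (1 - root n p) \<ge> ln (q / (real n + q))" using lo qpos by simp
  also have "ln (q / (real n + q)) = ln q - ln (real n + q)" using n0 q0 by (simp add: ln_div)
  finally have A: "- ln (1 - root n p) \<le> ln (real n + q) - ln q" by simp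
  have "ln (real n + q) \<le> ln (real n * (1 + q))"
    using n0 q0 assms by (intro ln_mono) (auto simp: field_simps)
  also have "\<dots> = ln (real n) + ln (1 + q)" using n0 q0 by (simp add: ln_mult)
  finally have B: "- ln (1 - root n p) \<le> ln (real n) + (ln (1 + q) - ln q)" using A by simp
  have C: "ln (1 - root n p) < 0" using hi lo qpos by simp
  have "0 \<le> Delta_p p l n" unfolding Delta_p_def using C assms
    by (intro divide_nonneg_pos) auto
  moreover have "l * Delta_p p l n = - ln (1 - root n p)" unfolding Delta_p_def using assms by simp
  ultimately show ?thesis using B unfolding q_def by simp
qed

lemma real_bound:
  fixes l D K :: real and n :: nat assumes "l > 0" "n \<ge> 3" "0 \<le> D" "l * D \<le> ln (real n) + K"
  shows "2 * (sqrt n / l) + D + 2 * small_delta l n * real n + real (card (msg_index n)) * (720 / (l^6 * (sqrt n / l)^5))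
     \<le> (6485 + \<bar>K\<bar>) * (sqrt (real n) * ln (real n) / l)"
proof -
  define S where "S = sqrt (real n)"
  define L where "L = ln (real n)"
  have S1: "S \<ge> 1" using assms by (simp add: S_def)
  have L1: "L \<ge> 1"
  proof -
    have "exp 1 \<le> (3::real)" using exp_le by simp
    also have "\<dots> \<le> real n" using assms by simp
    finally show ?thesis unfolding L_def using assms by (simp add: ln_ge_iff)
  qed
  have nS: "real n = S^2" using S_def by simp
  have SL1: "S*1 \<le> S*L" using L1 S1 by (intro mult_left_mono) auto
  have SL2: "1*L \<le> S*L" using L1 S1 by (intro mult_right_mono) auto
  have SLa: "S \<le> S*L" using SL1 by simp
  have SLb: "L \<le> S*L" using SL2 by simp
  have SLc: "1 \<le> S*L" using SLa S1 by linarith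
  note SL = SLa SLb SLc
  have t1: "2 * small_delta l n * real n = 2 * (S * L) / l"
  proof -
    have "small_delta l n = L / (l * S)" by (simp add: small_delta_def L_def S_def)
    then show ?thesis using nS S1 assms by (simp add: field_simps power2_eq_square)
  qed
  have cardb: "real (card (msg_index n)) \<le> 9 * S^4"
  proof -
    have "real (card (msg_index n)) \<le> (real n + 2)^2" using card_msg[of n] by (metis of_nat_add of_nat_le_iff of_nat_numeral of_nat_power)
    also have "\<dots> \<le> (3 * real n)^2" using assms by (intro power_mono) auto
    also have "\<dots> = 9 * S^4" using nS by (simp add: power_mult_distrib)
    finally show ?thesis .
  qed
  have "real (card (msg_index n)) * (720 / (l^6 * (S / l)^5)) = real (card (msg_index n)) * 720 / (l * S^5)"
  proof -
    have "l^6 = l * l^5" by (subst power_Suc[symmetric]) simp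
    then have "l^6 * (S/l)^5 = l * S^5" using assms by (simp add: power_divide)
    then show ?thesis by simp
  qed
  also have "\<dots> \<le> 9 * S^4 * 720 / (l * S^5)"
    using cardb assms S1 by (intro divide_right_mono mult_right_mono) auto
  also have "\<dots> = 6480 / (l * S)" using S1 by (simp add: field_simps eval_nat_numeral)
  also have "\<dots> \<le> 6480 / l" using S1 assms by (simp add: field_simps)
  finally have t3: "real (card (msg_index n)) * (720 / (l^6 * (S / l)^5)) \<le> 6480 / l" .
  have Dl: "D \<le> (L + K) / l" using assms by (simp add: field_simps L_def mult.commute)
  have "2 * (S / l) + D + 2 * small_delta l n * real n + real (card (msg_index n)) * (720 / (l^6 * (S / l)^5))
     \<le> (2 * S + (L + K) + 2 * (S * L) + 6480) / l"
  proof -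
    have eq: "(2*S + (L+K) + 2*(S*L) + 6480)/l = 2*(S/l) + (L+K)/l + 2*(S*L)/l + 6480/l"
      by (simp add: add_divide_distrib)
    show ?thesis using t1 t3 Dl eq by linarith
  qed
  also have "\<dots> \<le> ((6485 + \<bar>K\<bar>) * (S * L)) / l"
  proof (intro divide_right_mono)
    have "\<bar>K\<bar> * 1 \<le> \<bar>K\<bar> * (S*L)" using SL(3) by (intro mult_left_mono) auto
    then have "K \<le> \<bar>K\<bar> * (S*L)" by linarith
    moreover have "(6485 + \<bar>K\<bar>) * (S * L) = 6485 * (S*L) + \<bar>K\<bar> * (S*L)" by (simp add: distrib_right)
    ultimately show "2 * S + (L + K) + 2 * (S * L) + 6480 \<le> (6485 + \<bar>K\<bar>) * (S * L)"
      using SL by linarith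
  qed (use assms in simp)
  finally show ?thesis by (simp add: S_def L_def)
qed

theorem theorem7:
  fixes p l :: real
  assumes "0 < p" and "p < 1" and "0 < l"
  shows "\<exists>C::real. \<forall>\<^sub>F n in sequentially.
           (\<integral>\<^sup>+ \<omega>. ennreal (response_time l (Delta_p p l n) n \<omega>) \<partial>delay_space l n)
             \<le> ennreal (C * (sqrt (real n) * ln (real n) / l))"
proof (intro exI eventually_sequentiallyI)
  fix n :: nat assume n: "n \<ge> 3"
  define K where "K = ln (1 + - ln p) - ln (- ln p)"
  have D: "0 \<le> Delta_p p l n" "l * Delta_p p l n \<le> ln (real n) + K"
    using Dp_bound[OF assms, of n] n by (auto simp: K_def)
  have t: "sqrt (real n) / l > 0" using n assms by simp
  have "(\<integral>\<^sup>+ \<omega>. ennreal (response_time l (Delta_p p l n) n \<omega>) \<partial>delay_space l n)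
     \<le> ennreal (2 * (sqrt n / l) + Delta_p p l n + 2 * small_delta l n * real n + real (card (msg_index n)) * (720 / (l^6 * (sqrt n / l)^5)))"
    by (rule int_bound[OF assms(3) t _ D(1)]) (use n in simp)
  also have "\<dots> \<le> ennreal ((6485 + \<bar>K\<bar>) * (sqrt (real n) * ln (real n) / l))"
    by (rule ennreal_leI, rule real_bound[OF assms(3) n D])
  finally show "(\<integral>\<^sup>+ \<omega>. ennreal (response_time l (Delta_p p l n) n \<omega>) \<partial>delay_space l n)
             \<le> ennreal ((6485 + \<bar>ln (1 + - ln p) - ln (- ln p)\<bar>) * (sqrt (real n) * ln (real n) / l))"
    by (simp add: K_def)
qed

end
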